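(* Let $(\mathbb{S},\Sigma)$ be a measurable space, let $\{\mu_n\}_{n=1,2,\ldots}$ be finite measures on $(\mathbb{S},\Sigma)$ converging in total variation to a finite measure $\mu$, and let $f,f_n$ ($n=1,2,\ldots$) be measurable $[-\infty,+\infty]$-valued functions on $\mathbb{S}$ with $f\in L^1(\mathbb{S};\mu)$ and $f_n\in L^1(\mathbb{S};\mu_n)$ for each $n$. Then $$\lim_{n\to\infty}\sup_{C\in\Sigma}\Big|\int_C f_n(s)\,\mu_n(ds)-\int_C f(s)\,\mu(ds)\Big|=0$$ if and only if both of the following hold: (i) $f_n$ converges to $f$ in measure $\mu$; (ii) $\{f_n\}_{n=1,2,\ldots}$ is asymptotically uniformly integrable with respect to $\{\mu_n\}_{n=1,2,\ldots}$.
   Context: A sequence $\{h_n\}$ is asymptotically uniformly integrable with respect to $\{\mu_n\}$ if $\lim_{K\to+\infty}\limsup_{n\to\infty}\int_{\mathbb{S}}|h_n|\,\mathbf{1}\{|h_n|\ge K\}\,d\mu_n=0$. *)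

theory Defs
  imports "HOL-Analysis.Analysis"
begin

definition ereal_integrable :: "'a measure \<Rightarrow> ('a \<Rightarrow> ereal) \<Rightarrow> bool" where
  "ereal_integrable M f \<longleftrightarrow>
     f \<in> borel_measurable M \<and> (\<integral>\<^sup>+ x. e2ennreal \<bar>f x\<bar> \<partial>M) < \<infinity>"

definition ereal_set_integral :: "'a measure \<Rightarrow> 'a set \<Rightarrow> ('a \<Rightarrow> ereal) \<Rightarrow> ereal" where
  "ereal_set_integral M C f =
     enn2ereal (\<integral>\<^sup>+ x. e2ennreal (max (f x) 0) * indicator C x \<partial>M)
   - enn2ereal (\<integral>\<^sup>+ x. e2ennreal (max (- f x) 0) * indicator C x \<partial>M)"

definition tv_converges :: "(nat \<Rightarrow> 'a measure) \<Rightarrow> 'a measure \<Rightarrow> bool" where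
  "tv_converges \<mu>s \<mu> \<longleftrightarrow>
     (\<lambda>n. SUP C \<in> sets \<mu>. ereal \<bar>measure (\<mu>s n) C - measure \<mu> C\<bar>) \<longlonglongrightarrow> 0"

definition converges_in_measure ::
  "'a measure \<Rightarrow> (nat \<Rightarrow> 'a \<Rightarrow> ereal) \<Rightarrow> ('a \<Rightarrow> ereal) \<Rightarrow> bool" where
  "converges_in_measure \<mu> fs f \<longleftrightarrow>
     (\<forall>\<epsilon>>0. (\<lambda>n. emeasure \<mu> {s \<in> space \<mu>. ereal \<epsilon> \<le> \<bar>fs n s - f s\<bar>}) \<longlonglongrightarrow> 0)"

definition asympt_unif_integrable :: "(nat \<Rightarrow> 'a \<Rightarrow> ereal) \<Rightarrow> (nat \<Rightarrow> 'a measure) \<Rightarrow> bool" where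
  "asympt_unif_integrable fs \<mu>s \<longleftrightarrow>
     ((\<lambda>K::real. limsup (\<lambda>n. \<integral>\<^sup>+ s. e2ennreal \<bar>fs n s\<bar> * indicator {s. ereal K \<le> \<bar>fs n s\<bar>} s \<partial>(\<mu>s n)))
        \<longlongrightarrow> 0) at_top"

end

theory Submission
  imports Defs
begin

lemma sum_ind_floor:
  fixes \<delta> y :: real and n :: nat
  assumes "\<delta> > 0" "0 \<le> y" "y \<le> n * \<delta>"
  shows "(\<Sum>j\<in>{1..n}. indicator {x. real j * \<delta> \<le> x} y) = real (nat \<lfloor>y / \<delta>\<rfloor>)"
proof -
  have "y / \<delta> \<le> real n" using assms by (simp add: pos_divide_le_eq)
  then have "\<lfloor>y / \<delta>\<rfloor> \<le> \<lfloor>real n\<rfloor>" by (rule floor_mono)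
  then have fl: "nat \<lfloor>y / \<delta>\<rfloor> \<le> n" by simp
  have "{j\<in>{1..n}. real j * \<delta> \<le> y} = {1..nat \<lfloor>y / \<delta>\<rfloor>}"
  proof (intro set_eqI iffI)
    fix j assume "j \<in> {j\<in>{1..n}. real j * \<delta> \<le> y}"
    then have "real j \<le> y / \<delta>" "1 \<le> j" using assms by (auto simp: pos_le_divide_eq)
    then show "j \<in> {1..nat \<lfloor>y / \<delta>\<rfloor>}" by (simp add: le_nat_floor)
  next
    fix j assume "j \<in> {1..nat \<lfloor>y / \<delta>\<rfloor>}"
    then have "int j \<le> \<lfloor>y / \<delta>\<rfloor>" "1 \<le> j" "j \<le> n" using fl
      by (auto simp: le_nat_iff)
    then have "real j \<le> y / \<delta>" "1 \<le> j" "j \<le> n" 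
      by (auto simp: le_floor_iff)
    then show "j \<in> {j\<in>{1..n}. real j * \<delta> \<le> y}" using assms by (auto simp: pos_le_divide_eq)
  qed
  moreover have "(\<Sum>j\<in>{1..n}. indicator {x. real j * \<delta> \<le> x} y) = real (card {j\<in>{1..n}. real j * \<delta> \<le> y})"
    by (simp add: indicator_def sum.If_cases Int_def atLeastAtMost_iff)
  ultimately show ?thesis by simp
qed

lemma L1_nonneg:
  fixes N \<mu> :: "'a measure" and h :: "'a \<Rightarrow> real"
  assumes K0: "0 \<le> K" and sets: "sets N = sets \<mu>" and fN: "finite_measure N" and fmu: "finite_measure \<mu>"
    and hm: "h \<in> borel_measurable \<mu>" and hb: "\<And>x. x \<in> space \<mu> \<Longrightarrow> 0 \<le> h x \<and> h x \<le> K"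
    and tv: "\<And>C. C \<in> sets \<mu> \<Longrightarrow> \<bar>measure N C - measure \<mu> C\<bar> \<le> e"
  shows "\<bar>(\<integral>x. h x \<partial>N) - (\<integral>x. h x \<partial>\<mu>)\<bar> \<le> K * e"
proof (rule field_le_epsilon)
  fix \<epsilon> :: real assume "\<epsilon> > 0"
  interpret N: finite_measure N by (rule fN)
  interpret mu: finite_measure \<mu> by (rule fmu)
  have sp: "space N = space \<mu>" using sets by (rule sets_eq_imp_space_eq)
  have hmN: "h \<in> borel_measurable N" using hm by (simp add: measurable_cong_sets[OF sets refl])
  have e0: "0 \<le> e" using tv[of "{}"] by simp
  define c where "c = measure N (space N) + measure \<mu> (space \<mu>)"
  have c0: "0 \<le> c" by (simp add: c_def)
  show "\<bar>(\<integral>x. h x \<partial>N) - (\<integral>x. h x \<partial>\<mu>)\<bar> \<le> K * e + \<epsilon>"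
  proof (cases "K > 0")
    case False
    then have "\<And>x. x \<in> space \<mu> \<Longrightarrow> h x = 0" using hb by force
    then have "(\<integral>x. h x \<partial>N) = 0" "(\<integral>x. h x \<partial>\<mu>) = 0"
      using sp by (auto intro!: integral_eq_zero_AE AE_I2)
    then show ?thesis using \<open>\<epsilon> > 0\<close> False e0 K0 by simp
  next
    case True
    obtain m :: nat where m: "K * c / \<epsilon> < real m" using reals_Archimedean2 by blast
    define n where "n = Suc m"
    define \<delta> where "\<delta> = K / real n"
    have n0: "real n > 0" by (simp add: n_def)
    have d0: "\<delta> > 0" using True n0 by (simp add: \<delta>_def)
    have Kn: "K = real n * \<delta>" using n0 by (simp add: \<delta>_def)
    have dc: "\<delta> * c \<le> \<epsilon>"
    proof -
      have "K * c < \<epsilon> * real m" using m \<open>\<epsilon> > 0\<close> by (simp add: pos_divide_less_eq mult.commute)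
      also have "\<dots> \<le> \<epsilon> * real n" using \<open>\<epsilon> > 0\<close> by (simp add: n_def)
      finally show ?thesis using n0 by (simp add: \<delta>_def field_simps)
    qed
    define A where "A j = {x\<in>space \<mu>. real j * \<delta> \<le> h x}" for j :: nat
    have A_sets: "A j \<in> sets \<mu>" for j unfolding A_def using hm by measurable
    define s where "s x = (\<Sum>j\<in>{1..n}. \<delta> * indicator (A j) x)" for x
    have s_eq: "s x = \<delta> * real (nat \<lfloor>h x / \<delta>\<rfloor>)" if "x \<in> space \<mu>" for x
    proof -
      have "s x = \<delta> * (\<Sum>j\<in>{1..n}. indicator {y. real j * \<delta> \<le> y} (h x))"
        unfolding s_def sum_distrib_left A_def using that by (simp add: indicator_def)
      also have "\<dots> = \<delta> * real (nat \<lfloor>h x / \<delta>\<rfloor>)"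
        using sum_ind_floor[OF d0, of "h x" n] hb[OF that] Kn by simp
      finally show ?thesis .
    qed
    have s_le: "s x \<le> h x" and s_ge: "h x - s x \<le> \<delta>" if "x \<in> space \<mu>" for x
    proof -
      have h0: "0 \<le> h x" using hb that by simp
      have nn: "real (nat \<lfloor>h x / \<delta>\<rfloor>) = of_int \<lfloor>h x / \<delta>\<rfloor>" using h0 d0 by simp
      define t where "t = h x / \<delta>"
      have ht: "h x = t * \<delta>" using d0 by (simp add: t_def)
      have "of_int \<lfloor>t\<rfloor> \<le> t" "t < of_int \<lfloor>t\<rfloor> + 1" by linarith+
      then have "of_int \<lfloor>t\<rfloor> * \<delta> \<le> t * \<delta>" "t * \<delta> < (of_int \<lfloor>t\<rfloor> + 1) * \<delta>"
        using d0 by (auto intro: mult_right_mono mult_strict_right_mono)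
      with nn have "\<delta> * real (nat \<lfloor>h x / \<delta>\<rfloor>) \<le> h x" "h x < \<delta> * real (nat \<lfloor>h x / \<delta>\<rfloor>) + \<delta>"
        by (simp_all add: ht t_def[symmetric] algebra_simps)
      then show "s x \<le> h x" "h x - s x \<le> \<delta>" using s_eq[OF that] by simp_all
    qed
    have int_s: "(\<integral>x. s x \<partial>M) = (\<Sum>j\<in>{1..n}. \<delta> * measure M (A j))" if "sets M = sets \<mu>" "finite_measure M" for M
    proof -
      interpret M: finite_measure M by fact
      have AM: "A j \<in> sets M" for j using A_sets that(1) by simp
      then have "integrable M (\<lambda>x. \<delta> * indicator (A j) x)" for j
        by (intro integrable_mult_right integrable_real_indicator) (auto simp: top.not_eq_extremum[symmetric] M.emeasure_finite)
      then have "(\<integral>x. s x \<partial>M) = (\<Sum>j\<in>{1..n}. \<integral>x. \<delta> * indicator (A j) x \<partial>M)"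
        unfolding s_def by (rule Bochner_Integration.integral_sum[where f="\<lambda>j x. \<delta> * indicator (A j) x"])
      also have "\<dots> = (\<Sum>j\<in>{1..n}. \<delta> * measure M (A j))"
        using AM by (intro sum.cong refl) (simp add: Int_absorb2 sets.sets_into_space)
      finally show ?thesis .
    qed
    have "\<bar>(\<integral>x. s x \<partial>N) - (\<integral>x. s x \<partial>\<mu>)\<bar> = \<bar>\<Sum>j\<in>{1..n}. \<delta> * (measure N (A j) - measure \<mu> (A j))\<bar>"
      using int_s[OF sets fN] int_s[OF refl fmu] by (simp add: sum_subtractf right_diff_distrib)
    also have "\<dots> \<le> (\<Sum>j\<in>{1..n}. \<bar>\<delta> * (measure N (A j) - measure \<mu> (A j))\<bar>)"
      by (rule sum_abs)
    also have "\<dots> \<le> (\<Sum>j\<in>{1..n}. \<delta> * e)"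
      using d0 tv[OF A_sets] by (intro sum_mono) (simp add: abs_mult)
    also have "\<dots> = K * e" using Kn by simp
    finally have main: "\<bar>(\<integral>x. s x \<partial>N) - (\<integral>x. s x \<partial>\<mu>)\<bar> \<le> K * e" .
    have smN: "s \<in> borel_measurable N" and smmu: "s \<in> borel_measurable \<mu>"
      unfolding s_def using A_sets sets by auto
    have close: "\<bar>(\<integral>x. h x \<partial>M) - (\<integral>x. s x \<partial>M)\<bar> \<le> \<delta> * measure M (space M)"
      if "sets M = sets \<mu>" "finite_measure M" "h \<in> borel_measurable M" "s \<in> borel_measurable M" for M
    proof -
      interpret M: finite_measure M by fact
      have spM: "space M = space \<mu>" using that(1) by (rule sets_eq_imp_space_eq)
      have ih: "integrable M h"
        using that(3) hb spM by (intro M.integrable_const_bound[where B=K]) (auto intro!: AE_I2)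
      have "norm (s x) \<le> K" if "x \<in> space M" for x
      proof -
        have "0 \<le> s x" unfolding s_def using d0 by (intro sum_nonneg) simp
        then show ?thesis using s_le[of x] hb[of x] that spM by simp
      qed
      then have iS: "integrable M s"
        using that(4) by (intro M.integrable_const_bound[where B=K]) (auto intro!: AE_I2)
      have "\<bar>(\<integral>x. h x \<partial>M) - (\<integral>x. s x \<partial>M)\<bar> = \<bar>\<integral>x. h x - s x \<partial>M\<bar>"
        using ih iS by simp
      also have "\<dots> \<le> (\<integral>x. \<delta> \<partial>M)"
      proof -
        have "0 \<le> (\<integral>x. h x - s x \<partial>M)" by (intro integral_nonneg_AE AE_I2) (use s_le spM in auto)
        moreover have "(\<integral>x. h x - s x \<partial>M) \<le> (\<integral>x. \<delta> \<partial>M)"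
          using ih iS s_ge spM by (intro integral_mono) auto
        ultimately show ?thesis by simp
      qed
      also have "\<dots> = \<delta> * measure M (space M)" by simp
      finally show ?thesis .
    qed
    have "\<bar>(\<integral>x. h x \<partial>N) - (\<integral>x. h x \<partial>\<mu>)\<bar> \<le> \<bar>(\<integral>x. s x \<partial>N) - (\<integral>x. s x \<partial>\<mu>)\<bar>
       + \<bar>(\<integral>x. h x \<partial>N) - (\<integral>x. s x \<partial>N)\<bar> + \<bar>(\<integral>x. h x \<partial>\<mu>) - (\<integral>x. s x \<partial>\<mu>)\<bar>"
      by linarith
    also have "\<dots> \<le> K * e + \<delta> * measure N (space N) + \<delta> * measure \<mu> (space \<mu>)"
      using main close[OF sets fN hmN smN] close[OF refl fmu hm smmu] by linarith
    also have "\<dots> = K * e + \<delta> * c" by (simp add: c_def algebra_simps)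
    also have "\<dots> \<le> K * e + \<epsilon>" using dc by simp
    finally show ?thesis .
  qed
qed

lemma int_diff_le:
  fixes f h w :: "'a \<Rightarrow> real"
  assumes "integrable M f" "integrable M h" "integrable M w"
    "\<And>x. x \<in> space M \<Longrightarrow> \<bar>f x - h x\<bar> \<le> w x"
  shows "\<bar>(\<integral>x. f x \<partial>M) - (\<integral>x. h x \<partial>M)\<bar> \<le> (\<integral>x. w x \<partial>M)"
proof -
  have "\<bar>(\<integral>x. f x \<partial>M) - (\<integral>x. h x \<partial>M)\<bar> = \<bar>\<integral>x. f x - h x \<partial>M\<bar>"
    using assms by simp
  also have "\<dots> \<le> (\<integral>x. \<bar>f x - h x\<bar> \<partial>M)" by (rule integral_abs_bound)
  also have "\<dots> \<le> (\<integral>x. w x \<partial>M)" using assms by (intro integral_mono) auto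
  finally show ?thesis .
qed

lemma bounded_integrable:
  fixes h :: "'a \<Rightarrow> real"
  assumes "finite_measure M" "h \<in> borel_measurable M" "\<And>x. x \<in> space M \<Longrightarrow> \<bar>h x\<bar> \<le> K"
  shows "integrable M h"
proof -
  interpret finite_measure M by fact
  show ?thesis using assms by (intro integrable_const_bound[where B=K]) (auto intro!: AE_I2)
qed

lemma L1:
  fixes N \<mu> :: "'a measure" and h :: "'a \<Rightarrow> real"
  assumes K0: "0 \<le> K" and sets: "sets N = sets \<mu>" and fN: "finite_measure N" and fmu: "finite_measure \<mu>"
    and hm: "h \<in> borel_measurable \<mu>" and hb: "\<And>x. x \<in> space \<mu> \<Longrightarrow> \<bar>h x\<bar> \<le> K"
    and tv: "\<And>C. C \<in> sets \<mu> \<Longrightarrow> \<bar>measure N C - measure \<mu> C\<bar> \<le> e"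
  shows "\<bar>(\<integral>x. h x \<partial>N) - (\<integral>x. h x \<partial>\<mu>)\<bar> \<le> 2 * K * e"
proof -
  have sp: "space N = space \<mu>" using sets by (rule sets_eq_imp_space_eq)
  have hmN: "h \<in> borel_measurable N" using hm by (simp add: measurable_cong_sets[OF sets refl])
  have p: "\<bar>(\<integral>x. max (h x) 0 \<partial>N) - (\<integral>x. max (h x) 0 \<partial>\<mu>)\<bar> \<le> K * e"
    using hb K0 hm by (intro L1_nonneg[OF K0 sets fN fmu _ _ tv]) (auto simp: abs_le_iff)
  have m: "\<bar>(\<integral>x. max (- h x) 0 \<partial>N) - (\<integral>x. max (- h x) 0 \<partial>\<mu>)\<bar> \<le> K * e"
    using hb K0 hm by (intro L1_nonneg[OF K0 sets fN fmu _ _ tv]) (auto simp: abs_le_iff)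
  have split: "(\<integral>x. h x \<partial>M) = (\<integral>x. max (h x) 0 \<partial>M) - (\<integral>x. max (- h x) 0 \<partial>M)"
    if "finite_measure M" "h \<in> borel_measurable M" "space M = space \<mu>" for M
  proof -
    have i1: "integrable M (\<lambda>x. max (h x) 0)" using that hb K0
      by (intro bounded_integrable[where K=K]) (auto simp: abs_le_iff)
    have i2: "integrable M (\<lambda>x. max (- h x) 0)" using that hb K0
      by (intro bounded_integrable[where K=K]) (auto simp: abs_le_iff)
    have "(\<integral>x. h x \<partial>M) = (\<integral>x. max (h x) 0 - max (- h x) 0 \<partial>M)"
      by (intro Bochner_Integration.integral_cong refl) auto
    also have "\<dots> = (\<integral>x. max (h x) 0 \<partial>M) - (\<integral>x. max (- h x) 0 \<partial>M)"
      using i1 i2 by simp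
    finally show ?thesis .
  qed
  show ?thesis using split[OF fN hmN sp] split[OF fmu hm refl] p m by linarith
qed

locale core =
  fixes \<mu> :: "'a measure" and \<mu>s :: "nat \<Rightarrow> 'a measure" and g :: "'a \<Rightarrow> real" and gs :: "nat \<Rightarrow> 'a \<Rightarrow> real"
  assumes sets_mus: "\<And>n. sets (\<mu>s n) = sets \<mu>"
    and fin_mu: "finite_measure \<mu>" and fin_mus: "\<And>n. finite_measure (\<mu>s n)"
    and tvr: "\<And>\<epsilon>. \<epsilon> > 0 \<Longrightarrow> \<exists>N. \<forall>n\<ge>N. \<forall>C\<in>sets \<mu>. \<bar>measure (\<mu>s n) C - measure \<mu> C\<bar> \<le> \<epsilon>"
    and g_int: "integrable \<mu> g" and gs_int: "\<And>n. integrable (\<mu>s n) (gs n)"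
begin

lemma sp: "space (\<mu>s n) = space \<mu>" using sets_mus by (rule sets_eq_imp_space_eq)

lemma meas_eq: "measurable (\<mu>s n) X = measurable \<mu> X"
  by (rule measurable_cong_sets[OF sets_mus refl])

lemma g_meas[measurable]: "g \<in> borel_measurable \<mu>" using g_int by auto
lemma gs_meas[measurable]: "gs n \<in> borel_measurable \<mu>"
  using gs_int[of n] meas_eq[of n borel] by auto

lemma gs_meas'[measurable]: "gs n \<in> borel_measurable (\<mu>s n)"
  using gs_int[of n] by auto

lemma mu_fin: "finite_measure \<mu>" by (rule fin_mu)

definition I :: "nat \<Rightarrow> 'a set \<Rightarrow> real" where
  "I n C = (\<integral>x. indicator C x * gs n x \<partial>\<mu>s n)"
definition J :: "'a set \<Rightarrow> real" where
  "J C = (\<integral>x. indicator C x * g x \<partial>\<mu>)"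
definition Tail :: "nat \<Rightarrow> real \<Rightarrow> real" where
  "Tail n K = (\<integral>x. \<bar>gs n x\<bar> * indicator {x\<in>space \<mu>. K \<le> \<bar>gs n x\<bar>} x \<partial>\<mu>s n)"

lemma int_ind_g: "C \<in> sets \<mu> \<Longrightarrow> integrable \<mu> (\<lambda>x. indicator C x * g x)"
  using integrable_real_mult_indicator[OF _ g_int, of C] by (simp add: mult.commute)
lemma int_ind_gs: "C \<in> sets \<mu> \<Longrightarrow> integrable (\<mu>s n) (\<lambda>x. indicator C x * gs n x)"
  using integrable_real_mult_indicator[OF _ gs_int, of C n] sets_mus by (simp add: mult.commute)

lemma J_bound: "C \<in> sets \<mu> \<Longrightarrow> \<bar>J C\<bar> \<le> (\<integral>x. \<bar>g x\<bar> * indicator C x \<partial>\<mu>)"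
proof -
  have "\<bar>J C\<bar> \<le> (\<integral>x. \<bar>indicator C x * g x\<bar> \<partial>\<mu>)" unfolding J_def by (rule integral_abs_bound)
  also have "\<dots> = (\<integral>x. \<bar>g x\<bar> * indicator C x \<partial>\<mu>)" by (simp add: abs_mult mult.commute)
  finally show ?thesis .
qed

lemma J_bound2: "C \<in> sets \<mu> \<Longrightarrow> \<bar>J C\<bar> \<le> (\<integral>x. \<bar>g x\<bar> \<partial>\<mu>)"
proof -
  assume C: "C \<in> sets \<mu>"
  have "integrable \<mu> (\<lambda>x. \<bar>g x\<bar> * indicator C x)" using C g_int by (intro integrable_real_mult_indicator) auto
  then have "(\<integral>x. \<bar>g x\<bar> * indicator C x \<partial>\<mu>) \<le> (\<integral>x. \<bar>g x\<bar> \<partial>\<mu>)"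
    using g_int by (intro integral_mono) (auto simp: indicator_def)
  then show ?thesis using J_bound[OF C] by linarith
qed

lemma tail_g: "\<epsilon> > 0 \<Longrightarrow> \<exists>K0. \<forall>K\<ge>K0. (\<integral>x. \<bar>g x\<bar> * indicator {x\<in>space \<mu>. K \<le> \<bar>g x\<bar>} x \<partial>\<mu>) \<le> \<epsilon>"
proof -
  assume "\<epsilon> > 0"
  define s where "s m x = \<bar>g x\<bar> * indicator {x\<in>space \<mu>. real m \<le> \<bar>g x\<bar>} x" for m :: nat and x
  have lim: "(\<lambda>m. \<integral>x. s m x \<partial>\<mu>) \<longlonglongrightarrow> (\<integral>x. 0 \<partial>\<mu>)"
  proof (rule integral_dominated_convergence[where w="\<lambda>x. \<bar>g x\<bar>"])
    show "(\<lambda>x. 0::real) \<in> borel_measurable \<mu>" by simp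
    show "s m \<in> borel_measurable \<mu>" for m unfolding s_def by measurable
    show "integrable \<mu> (\<lambda>x. \<bar>g x\<bar>)" using g_int by auto
    show "AE x in \<mu>. (\<lambda>m. s m x) \<longlonglongrightarrow> 0"
    proof (rule AE_I2)
      fix x assume "x \<in> space \<mu>"
      obtain m0 :: nat where "\<bar>g x\<bar> < real m0" using reals_Archimedean2 by blast
      then have "\<forall>m\<ge>m0. s m x = 0" unfolding s_def
        by (auto simp: indicator_def)
      then show "(\<lambda>m. s m x) \<longlonglongrightarrow> 0" by (intro tendsto_eventually) (auto simp: eventually_sequentially)
    qed
    show "AE x in \<mu>. norm (s m x) \<le> \<bar>g x\<bar>" for m
      by (intro AE_I2) (auto simp: s_def indicator_def)
  qed
  then obtain m0 where m0: "\<forall>m\<ge>m0. (\<integral>x. s m x \<partial>\<mu>) < \<epsilon>"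
    using \<open>\<epsilon> > 0\<close> by (auto dest!: order_tendstoD(2) simp: eventually_sequentially)
  show ?thesis
  proof (intro exI allI impI)
    fix K assume "real m0 \<le> K"
    have "(\<integral>x. \<bar>g x\<bar> * indicator {x\<in>space \<mu>. K \<le> \<bar>g x\<bar>} x \<partial>\<mu>) \<le> (\<integral>x. s m0 x \<partial>\<mu>)"
      using \<open>real m0 \<le> K\<close> unfolding s_def
      by (intro integral_mono integrable_real_mult_indicator g_int integrable_abs) (auto simp: indicator_def)
    then show "(\<integral>x. \<bar>g x\<bar> * indicator {x\<in>space \<mu>. K \<le> \<bar>g x\<bar>} x \<partial>\<mu>) \<le> \<epsilon>" using m0 by force
  qed
qed

lemma abs_cont: "\<eta> > 0 \<Longrightarrow> \<exists>\<delta>>0. \<forall>A\<in>sets \<mu>. measure \<mu> A \<le> \<delta> \<longrightarrow> (\<integral>x. \<bar>g x\<bar> * indicator A x \<partial>\<mu>) \<le> \<eta>"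
proof -
  assume "\<eta> > 0"
  then obtain K0 where K0: "\<forall>K\<ge>K0. (\<integral>x. \<bar>g x\<bar> * indicator {x\<in>space \<mu>. K \<le> \<bar>g x\<bar>} x \<partial>\<mu>) \<le> \<eta>/2"
    using tail_g[of "\<eta>/2"] by auto
  define K where "K = max K0 1"
  have K1: "K \<ge> 1" "K \<ge> K0" by (auto simp: K_def)
  interpret mu: finite_measure \<mu> by (rule fin_mu)
  show ?thesis
  proof (intro exI conjI ballI impI)
    show "\<eta> / (2 * K) > 0" using K1 \<open>\<eta> > 0\<close> by simp
    fix A assume A: "A \<in> sets \<mu>" "measure \<mu> A \<le> \<eta> / (2 * K)"
    have "(\<integral>x. \<bar>g x\<bar> * indicator A x \<partial>\<mu>) \<le>
        (\<integral>x. \<bar>g x\<bar> * indicator {x\<in>space \<mu>. K \<le> \<bar>g x\<bar>} x + K * indicator A x \<partial>\<mu>)"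
      using A K1
      by (intro integral_mono integrable_real_mult_indicator g_int integrable_abs Bochner_Integration.integrable_add
            integrable_mult_right integrable_real_indicator)
         (auto simp: indicator_def mu.emeasure_finite top.not_eq_extremum[symmetric])
    also have "\<dots> = (\<integral>x. \<bar>g x\<bar> * indicator {x\<in>space \<mu>. K \<le> \<bar>g x\<bar>} x \<partial>\<mu>) + K * measure \<mu> A"
      using A by (subst Bochner_Integration.integral_add)
        (auto intro!: integrable_real_mult_indicator g_int integrable_mult_right integrable_real_indicator
          simp: Int_absorb2 sets.sets_into_space mu.emeasure_finite top.not_eq_extremum[symmetric])
    also have "\<dots> \<le> \<eta>/2 + K * (\<eta> / (2 * K))"
      using K0 K1 A by (intro add_mono mult_left_mono) auto
    also have "\<dots> = \<eta>" using K1 by simp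
    finally show "(\<integral>x. \<bar>g x\<bar> * indicator A x \<partial>\<mu>) \<le> \<eta>" .
  qed
qed

end

context core begin

lemma near:
  assumes C: "C \<in> sets \<mu>" and b: "\<forall>x\<in>C. \<bar>gs n x\<bar> \<le> L" and L: "0 \<le> L"
    and tv: "\<forall>C\<in>sets \<mu>. \<bar>measure (\<mu>s n) C - measure \<mu> C\<bar> \<le> e"
  shows "integrable \<mu> (\<lambda>x. indicator C x * gs n x)"
    and "\<bar>(\<integral>x. indicator C x * gs n x \<partial>\<mu>) - I n C\<bar> \<le> 2 * L * e"
proof -
  have hb: "\<bar>indicator C x * gs n x\<bar> \<le> L" for x using b L by (auto simp: indicator_def)
  show "integrable \<mu> (\<lambda>x. indicator C x * gs n x)"
    using C hb by (intro bounded_integrable[OF fin_mu, where K=L]) auto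
  have "\<bar>(\<integral>x. indicator C x * gs n x \<partial>\<mu>s n) - (\<integral>x. indicator C x * gs n x \<partial>\<mu>)\<bar> \<le> 2 * L * e"
    using C hb tv by (intro L1[OF L sets_mus fin_mus fin_mu]) auto
  then show "\<bar>(\<integral>x. indicator C x * gs n x \<partial>\<mu>) - I n C\<bar> \<le> 2 * L * e"
    unfolding I_def by linarith
qed

lemma lower_bd:
  assumes C: "C \<in> sets \<mu>" and i: "integrable \<mu> (\<lambda>x. indicator C x * gs n x)"
    and d: "\<forall>x\<in>C. \<epsilon> \<le> gs n x - g x"
  shows "\<epsilon> * measure \<mu> C \<le> (\<integral>x. indicator C x * gs n x \<partial>\<mu>) - J C"
proof -
  interpret mu: finite_measure \<mu> by (rule fin_mu)
  have "\<epsilon> * measure \<mu> C = (\<integral>x. \<epsilon> * indicator C x \<partial>\<mu>)"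
    using C by (simp add: Int_absorb2 sets.sets_into_space)
  also have "\<dots> \<le> (\<integral>x. indicator C x * gs n x - indicator C x * g x \<partial>\<mu>)"
    using C d i int_ind_g[OF C]
    by (intro integral_mono Bochner_Integration.integrable_diff integrable_mult_right integrable_real_indicator)
       (auto simp: indicator_def mu.emeasure_finite top.not_eq_extremum[symmetric])
  also have "\<dots> = (\<integral>x. indicator C x * gs n x \<partial>\<mu>) - J C"
    unfolding J_def using i int_ind_g[OF C] by simp
  finally show ?thesis .
qed

lemma upper_bd:
  assumes C: "C \<in> sets \<mu>" and i: "integrable \<mu> (\<lambda>x. indicator C x * gs n x)"
    and d: "\<forall>x\<in>C. \<epsilon> \<le> g x - gs n x"
  shows "\<epsilon> * measure \<mu> C \<le> J C - (\<integral>x. indicator C x * gs n x \<partial>\<mu>)"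
proof -
  interpret mu: finite_measure \<mu> by (rule fin_mu)
  have "\<epsilon> * measure \<mu> C = (\<integral>x. \<epsilon> * indicator C x \<partial>\<mu>)"
    using C by (simp add: Int_absorb2 sets.sets_into_space)
  also have "\<dots> \<le> (\<integral>x. indicator C x * g x - indicator C x * gs n x \<partial>\<mu>)"
    using C d i int_ind_g[OF C]
    by (intro integral_mono Bochner_Integration.integrable_diff integrable_mult_right integrable_real_indicator)
       (auto simp: indicator_def mu.emeasure_finite top.not_eq_extremum[symmetric])
  also have "\<dots> = J C - (\<integral>x. indicator C x * gs n x \<partial>\<mu>)"
    unfolding J_def using i int_ind_g[OF C] by simp
  finally show ?thesis .
qed

lemma Markov_gs:
  assumes "L > 0"
  shows "measure (\<mu>s n) {x\<in>space \<mu>. L \<le> \<bar>gs n x\<bar>} \<le> (\<integral>x. \<bar>gs n x\<bar> \<partial>\<mu>s n) / L"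
  using integral_Markov_inequality_measure[of "\<mu>s n" "\<lambda>x. \<bar>gs n x\<bar>" "space (\<mu>s n)" L] assms gs_int[of n]
  by (simp add: sp sets_mus)

lemma bound_gs:
  assumes SC: "\<forall>\<epsilon>>0. \<exists>N. \<forall>n\<ge>N. \<forall>C\<in>sets \<mu>. \<bar>I n C - J C\<bar> \<le> \<epsilon>"
  shows "\<exists>N. \<forall>n\<ge>N. (\<integral>x. \<bar>gs n x\<bar> \<partial>\<mu>s n) \<le> 2 * (\<integral>x. \<bar>g x\<bar> \<partial>\<mu>) + 2"
proof -
  obtain N where N: "\<forall>n\<ge>N. \<forall>C\<in>sets \<mu>. \<bar>I n C - J C\<bar> \<le> 1" using SC by fastforce
  show ?thesis
  proof (intro exI allI impI)
    fix n assume "n \<ge> N"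
    define P where "P = {x\<in>space \<mu>. 0 \<le> gs n x}"
    define Q where "Q = {x\<in>space \<mu>. gs n x < 0}"
    have PQ: "P \<in> sets \<mu>" "Q \<in> sets \<mu>" unfolding P_def Q_def by measurable
    have "(\<integral>x. \<bar>gs n x\<bar> \<partial>\<mu>s n) = (\<integral>x. indicator P x * gs n x - indicator Q x * gs n x \<partial>\<mu>s n)"
      by (intro Bochner_Integration.integral_cong refl) (auto simp: P_def Q_def indicator_def sp)
    also have "\<dots> = I n P - I n Q"
      unfolding I_def using int_ind_gs[OF PQ(1)] int_ind_gs[OF PQ(2)] by simp
    also have "\<dots> \<le> (\<bar>J P\<bar> + 1) + (\<bar>J Q\<bar> + 1)"
      using N \<open>n \<ge> N\<close> PQ by (smt (verit, best))
    also have "\<dots> \<le> 2 * (\<integral>x. \<bar>g x\<bar> \<partial>\<mu>) + 2"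
      using J_bound2[OF PQ(1)] J_bound2[OF PQ(2)] by linarith
    finally show "(\<integral>x. \<bar>gs n x\<bar> \<partial>\<mu>s n) \<le> 2 * (\<integral>x. \<bar>g x\<bar> \<partial>\<mu>) + 2" .
  qed
qed

end

context core begin

definition SC where "SC \<longleftrightarrow> (\<forall>\<epsilon>>0. \<exists>N. \<forall>n\<ge>N. \<forall>C\<in>sets \<mu>. \<bar>I n C - J C\<bar> \<le> \<epsilon>)"
definition CM where "CM \<longleftrightarrow> (\<forall>\<epsilon>>0. \<forall>\<eta>>0. \<exists>N. \<forall>n\<ge>N. measure \<mu> {x\<in>space \<mu>. \<epsilon> \<le> \<bar>gs n x - g x\<bar>} \<le> \<eta>)"
definition UI where "UI \<longleftrightarrow> (\<forall>\<eta>>0. \<exists>K. \<exists>N. \<forall>n\<ge>N. Tail n K \<le> \<eta>)"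

lemma CM_of_SC:
  assumes sc: SC shows CM
  unfolding CM_def
proof (intro allI impI)
  fix \<epsilon> \<eta> :: real assume \<epsilon>: "\<epsilon> > 0" and \<eta>: "\<eta> > 0"
  interpret mu: finite_measure \<mu> by (rule fin_mu)
  define B where "B = 2 * (\<integral>x. \<bar>g x\<bar> \<partial>\<mu>) + 2"
  have "0 \<le> (\<integral>x. \<bar>g x\<bar> \<partial>\<mu>)" by (rule integral_nonneg_AE) auto
  then have B0: "B > 0" unfolding B_def by linarith
  obtain N1 where N1: "\<forall>n\<ge>N1. (\<integral>x. \<bar>gs n x\<bar> \<partial>\<mu>s n) \<le> B"
    using bound_gs sc unfolding SC_def B_def by blast
  define L where "L = 4 * B / \<eta>"
  have L0: "L > 0" using B0 \<eta> by (simp add: L_def)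
  define e where "e = min (\<eta>/4) (\<epsilon> * \<eta> / (16 * L))"
  have e0: "e > 0" using \<eta> \<epsilon> L0 by (simp add: e_def)
  have eL: "2 * L * e \<le> \<epsilon> * \<eta> / 8"
  proof -
    have "2 * L * e \<le> 2 * L * (\<epsilon> * \<eta> / (16 * L))" using L0 by (intro mult_left_mono) (auto simp: e_def)
    also have "\<dots> = \<epsilon> * \<eta> / 8" using L0 by (simp add: field_simps)
    finally show ?thesis .
  qed
  obtain N2 where N2: "\<forall>n\<ge>N2. \<forall>C\<in>sets \<mu>. \<bar>measure (\<mu>s n) C - measure \<mu> C\<bar> \<le> e" using tvr[OF e0] by blast
  obtain N3 where N3: "\<forall>n\<ge>N3. \<forall>C\<in>sets \<mu>. \<bar>I n C - J C\<bar> \<le> \<epsilon> * \<eta> / 8"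
    using sc \<epsilon> \<eta> unfolding SC_def by (metis divide_pos_pos mult_pos_pos zero_less_numeral)
  show "\<exists>N. \<forall>n\<ge>N. measure \<mu> {x\<in>space \<mu>. \<epsilon> \<le> \<bar>gs n x - g x\<bar>} \<le> \<eta>"
  proof (intro exI allI impI)
    fix n assume n: "n \<ge> max N1 (max N2 N3)"
    define Cp where "Cp = {x\<in>space \<mu>. \<epsilon> \<le> gs n x - g x \<and> \<bar>gs n x\<bar> \<le> L}"
    define Cm where "Cm = {x\<in>space \<mu>. \<epsilon> \<le> g x - gs n x \<and> \<bar>gs n x\<bar> \<le> L}"
    define D where "D = {x\<in>space \<mu>. L \<le> \<bar>gs n x\<bar>}"
    have sets: "Cp \<in> sets \<mu>" "Cm \<in> sets \<mu>" "D \<in> sets \<mu>" unfolding Cp_def Cm_def D_def by measurable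
    have tvn: "\<forall>C\<in>sets \<mu>. \<bar>measure (\<mu>s n) C - measure \<mu> C\<bar> \<le> e" using N2 n by auto
    have scn: "\<bar>I n C - J C\<bar> \<le> \<epsilon> * \<eta> / 8" if "C \<in> sets \<mu>" for C using N3 n that by auto
    have "\<epsilon> * measure \<mu> Cp \<le> \<epsilon> * \<eta> / 4"
    proof -
      have b: "\<forall>x\<in>Cp. \<bar>gs n x\<bar> \<le> L" by (auto simp: Cp_def)
      have "\<epsilon> * measure \<mu> Cp \<le> (\<integral>x. indicator Cp x * gs n x \<partial>\<mu>) - J Cp"
        using near(1)[OF sets(1) b _ tvn] L0 by (intro lower_bd[OF sets(1)]) (auto simp: Cp_def)
      then show ?thesis using near(2)[OF sets(1) b _ tvn] L0 scn[OF sets(1)] eL by linarith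
    qed
    then have mCp: "measure \<mu> Cp \<le> \<eta> / 4" using \<epsilon> by (simp add: field_simps)
    have "\<epsilon> * measure \<mu> Cm \<le> \<epsilon> * \<eta> / 4"
    proof -
      have b: "\<forall>x\<in>Cm. \<bar>gs n x\<bar> \<le> L" by (auto simp: Cm_def)
      have "\<epsilon> * measure \<mu> Cm \<le> J Cm - (\<integral>x. indicator Cm x * gs n x \<partial>\<mu>)"
        using near(1)[OF sets(2) b _ tvn] L0 by (intro upper_bd[OF sets(2)]) (auto simp: Cm_def)
      then show ?thesis using near(2)[OF sets(2) b _ tvn] L0 scn[OF sets(2)] eL by linarith
    qed
    then have mCm: "measure \<mu> Cm \<le> \<eta> / 4" using \<epsilon> by (simp add: field_simps)
    have "measure \<mu> D \<le> measure (\<mu>s n) D + e" using tvn sets(3) by force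
    also have "\<dots> \<le> B / L + \<eta> / 4"
    proof -
      have "measure (\<mu>s n) D \<le> (\<integral>x. \<bar>gs n x\<bar> \<partial>\<mu>s n) / L" unfolding D_def by (rule Markov_gs[OF L0])
      also have "\<dots> \<le> B / L" using N1 n L0 by (intro divide_right_mono) auto
      finally show ?thesis using e_def by linarith
    qed
    also have "\<dots> = \<eta> / 4 + \<eta> / 4" using B0 \<eta> by (simp add: L_def)
    finally have mD: "measure \<mu> D \<le> \<eta> / 2" by simp
    have sub: "{x\<in>space \<mu>. \<epsilon> \<le> \<bar>gs n x - g x\<bar>} \<subseteq> Cp \<union> Cm \<union> D"
      by (auto simp: Cp_def Cm_def D_def abs_le_iff)
    have "measure \<mu> {x\<in>space \<mu>. \<epsilon> \<le> \<bar>gs n x - g x\<bar>} \<le> measure \<mu> (Cp \<union> Cm \<union> D)"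
      using sub sets by (intro mu.finite_measure_mono) auto
    also have "\<dots> \<le> measure \<mu> Cp + measure \<mu> Cm + measure \<mu> D"
      using sets measure_Un_le[of Cp \<mu> Cm] measure_Un_le[of "Cp \<union> Cm" \<mu> D] by auto
    also have "\<dots> \<le> \<eta>" using mCp mCm mD by linarith
    finally show "measure \<mu> {x\<in>space \<mu>. \<epsilon> \<le> \<bar>gs n x - g x\<bar>} \<le> \<eta>" .
  qed
qed

end

context core begin

lemma UI_of_SC:
  assumes sc: SC shows UI
  unfolding UI_def
proof (intro allI impI)
  fix \<eta> :: real assume \<eta>: "\<eta> > 0"
  interpret mu: finite_measure \<mu> by (rule fin_mu)
  define B where "B = 2 * (\<integral>x. \<bar>g x\<bar> \<partial>\<mu>) + 2"
  have "0 \<le> (\<integral>x. \<bar>g x\<bar> \<partial>\<mu>)" by (rule integral_nonneg_AE) auto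
  then have B0: "B > 0" unfolding B_def by linarith
  obtain N1 where N1: "\<forall>n\<ge>N1. (\<integral>x. \<bar>gs n x\<bar> \<partial>\<mu>s n) \<le> B"
    using bound_gs sc unfolding SC_def B_def by blast
  obtain \<delta> where \<delta>: "\<delta> > 0" "\<forall>A\<in>sets \<mu>. measure \<mu> A \<le> \<delta> \<longrightarrow> (\<integral>x. \<bar>g x\<bar> * indicator A x \<partial>\<mu>) \<le> \<eta>/2"
    using abs_cont[of "\<eta>/2"] \<eta> by auto
  define K where "K = max 1 (2 * B / \<delta>)"
  have K1: "K \<ge> 1" by (simp add: K_def)
  have BK: "B / K \<le> \<delta> / 2"
  proof -
    have "2 * B / \<delta> \<le> K" by (simp add: K_def)
    then have "2 * B \<le> K * \<delta>" using \<delta> by (simp add: pos_divide_le_eq)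
    then show ?thesis using K1 \<delta> by (simp add: field_simps)
  qed
  have e0: "\<delta> / 2 > 0" using \<delta> by simp
  obtain N2 where N2: "\<forall>n\<ge>N2. \<forall>C\<in>sets \<mu>. \<bar>measure (\<mu>s n) C - measure \<mu> C\<bar> \<le> \<delta> / 2" using tvr[OF e0] by blast
  obtain N3 where N3: "\<forall>n\<ge>N3. \<forall>C\<in>sets \<mu>. \<bar>I n C - J C\<bar> \<le> \<eta> / 4"
    using sc \<eta> unfolding SC_def by (metis divide_pos_pos zero_less_numeral)
  show "\<exists>K N. \<forall>n\<ge>N. Tail n K \<le> \<eta>"
  proof (intro exI allI impI)
    fix n assume n: "n \<ge> max N1 (max N2 N3)"
    define P where "P = {x\<in>space \<mu>. K \<le> gs n x}"
    define Q where "Q = {x\<in>space \<mu>. gs n x \<le> - K}"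
    define D where "D = {x\<in>space \<mu>. K \<le> \<bar>gs n x\<bar>}"
    have sets: "P \<in> sets \<mu>" "Q \<in> sets \<mu>" "D \<in> sets \<mu>" unfolding P_def Q_def D_def by measurable
    have "Tail n K = (\<integral>x. indicator P x * gs n x - indicator Q x * gs n x \<partial>\<mu>s n)"
      unfolding Tail_def using K1
      by (intro Bochner_Integration.integral_cong refl) (auto simp: P_def Q_def indicator_def sp)
    also have "\<dots> = I n P - I n Q"
      unfolding I_def using int_ind_gs[OF sets(1)] int_ind_gs[OF sets(2)] by simp
    also have "\<dots> \<le> \<bar>J P\<bar> + \<bar>J Q\<bar> + \<eta> / 2"
    proof -
      have "\<bar>I n P - J P\<bar> \<le> \<eta> / 4" "\<bar>I n Q - J Q\<bar> \<le> \<eta> / 4" using N3 n sets by auto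
      then show ?thesis by linarith
    qed
    also have "\<dots> \<le> (\<integral>x. \<bar>g x\<bar> * indicator P x \<partial>\<mu>) + (\<integral>x. \<bar>g x\<bar> * indicator Q x \<partial>\<mu>) + \<eta> / 2"
      using J_bound[OF sets(1)] J_bound[OF sets(2)] by linarith
    also have "(\<integral>x. \<bar>g x\<bar> * indicator P x \<partial>\<mu>) + (\<integral>x. \<bar>g x\<bar> * indicator Q x \<partial>\<mu>) = (\<integral>x. \<bar>g x\<bar> * indicator P x + \<bar>g x\<bar> * indicator Q x \<partial>\<mu>)"
      using sets g_int by (intro Bochner_Integration.integral_add[symmetric] integrable_real_mult_indicator) auto
    also have "\<dots> = (\<integral>x. \<bar>g x\<bar> * indicator D x \<partial>\<mu>)"
      using K1 by (intro Bochner_Integration.integral_cong refl) (auto simp: P_def Q_def D_def indicator_def)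
    also have "\<dots> \<le> \<eta> / 2"
    proof -
      have "\<bar>measure (\<mu>s n) D - measure \<mu> D\<bar> \<le> \<delta> / 2" using N2 n sets(3) by auto
      then have "measure \<mu> D \<le> measure (\<mu>s n) D + \<delta> / 2" by linarith
      also have "measure (\<mu>s n) D \<le> B / K"
      proof -
        have "measure (\<mu>s n) D \<le> (\<integral>x. \<bar>gs n x\<bar> \<partial>\<mu>s n) / K" unfolding D_def using K1 by (intro Markov_gs) auto
        also have "\<dots> \<le> B / K" using N1 n K1 by (intro divide_right_mono) auto
        finally show ?thesis .
      qed
      finally have "measure \<mu> D \<le> \<delta>" using BK by linarith
      then show ?thesis using \<delta>(2) sets(3) by blast
    qed
    finally show "Tail n K \<le> \<eta>" by linarith
  qed
qed

end

lemma clip_lip: "\<bar>max (- K) (min K a) - max (- K) (min K b)\<bar> \<le> \<bar>a - b::real\<bar>"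
  by (simp add: max_def min_def abs_if)

lemma clip_bd: "0 \<le> K \<Longrightarrow> \<bar>max (- K) (min K a)\<bar> \<le> (K::real)"
  by (simp add: max_def min_def abs_if)

lemma clip_err: "0 \<le> K \<Longrightarrow> \<bar>a - max (- K) (min K a)\<bar> \<le> \<bar>a\<bar> * indicator {x. K \<le> \<bar>x\<bar>} (a::real)"
  by (simp add: max_def min_def abs_if indicator_def)

context core begin

lemma Tail_mono:
  assumes "K \<le> K'" shows "Tail n K' \<le> Tail n K"
  unfolding Tail_def using assms gs_int[of n]
  by (intro integral_mono integrable_real_mult_indicator integrable_abs) (auto simp: sets_mus indicator_def)

lemma SC5:
  assumes cm: CM and ui: UI and \<epsilon>: "\<epsilon> > 0"
  shows "\<exists>N. \<forall>n\<ge>N. \<forall>C\<in>sets \<mu>. \<bar>I n C - J C\<bar> \<le> 5 * \<epsilon>"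
proof -
  interpret mu: finite_measure \<mu> by (rule fin_mu)
  obtain K1 N1 where N1: "\<forall>n\<ge>N1. Tail n K1 \<le> \<epsilon>" using ui \<epsilon> unfolding UI_def by blast
  obtain K2 where K2: "\<forall>K\<ge>K2. (\<integral>x. \<bar>g x\<bar> * indicator {x\<in>space \<mu>. K \<le> \<bar>g x\<bar>} x \<partial>\<mu>) \<le> \<epsilon>"
    using tail_g[OF \<epsilon>] by blast
  define K where "K = max 1 (max K1 K2)"
  have K: "K \<ge> 1" "K \<ge> K1" "K \<ge> K2" by (auto simp: K_def)
  define c where "c = measure \<mu> (space \<mu>)"
  have c0: "c \<ge> 0" by (simp add: c_def)
  define \<delta> where "\<delta> = \<epsilon> / (c + 1)"
  have \<delta>0: "\<delta> > 0" using \<epsilon> c0 by (simp add: \<delta>_def)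
  have \<delta>c: "\<delta> * c \<le> \<epsilon>" using \<epsilon> c0 by (simp add: \<delta>_def field_simps)
  define e where "e = \<epsilon> / (2 * K)"
  have e0: "e > 0" using \<epsilon> K by (simp add: e_def)
  have Ke: "2 * K * e = \<epsilon>" using K by (simp add: e_def)
  obtain N2 where N2: "\<forall>n\<ge>N2. measure \<mu> {x\<in>space \<mu>. \<delta> \<le> \<bar>gs n x - g x\<bar>} \<le> e"
    using cm \<delta>0 e0 unfolding CM_def by blast
  obtain N3 where N3: "\<forall>n\<ge>N3. \<forall>C\<in>sets \<mu>. \<bar>measure (\<mu>s n) C - measure \<mu> C\<bar> \<le> e" using tvr[OF e0] by blast
  define \<phi> where "\<phi> y = max (- K) (min K y)" for y
  have \<phi>m[measurable]: "\<phi> \<in> borel_measurable borel" unfolding \<phi>_def by measurable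
  show ?thesis
  proof (intro exI allI impI ballI)
    fix n C assume n: "n \<ge> max N1 (max N2 N3)" and C: "C \<in> sets \<mu>"
    have CN: "C \<in> sets (\<mu>s n)" using C sets_mus by simp
    define a where "a = (\<integral>x. indicator C x * \<phi> (gs n x) \<partial>\<mu>s n)"
    define b where "b = (\<integral>x. indicator C x * \<phi> (gs n x) \<partial>\<mu>)"
    define d where "d = (\<integral>x. indicator C x * \<phi> (g x) \<partial>\<mu>)"
    have hb: "\<bar>indicator C x * \<phi> y\<bar> \<le> K" for x y
      using clip_bd[of K y] K by (auto simp: indicator_def \<phi>_def)
    have ia: "integrable (\<mu>s n) (\<lambda>x. indicator C x * \<phi> (gs n x))"
      using CN hb by (intro bounded_integrable[OF fin_mus, where K=K]) auto
    have ib: "integrable \<mu> (\<lambda>x. indicator C x * \<phi> (gs n x))"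
      using C hb by (intro bounded_integrable[OF fin_mu, where K=K]) auto
    have id: "integrable \<mu> (\<lambda>x. indicator C x * \<phi> (g x))"
      using C hb by (intro bounded_integrable[OF fin_mu, where K=K]) auto
    have 1: "\<bar>I n C - a\<bar> \<le> \<epsilon>"
    proof -
      have "\<bar>I n C - a\<bar> \<le> Tail n K"
        unfolding I_def a_def Tail_def
      proof (rule int_diff_le[OF int_ind_gs[OF C] ia])
        show "integrable (\<mu>s n) (\<lambda>x. \<bar>gs n x\<bar> * indicator {x \<in> space \<mu>. K \<le> \<bar>gs n x\<bar>} x)"
          using gs_int[of n] by (intro integrable_real_mult_indicator integrable_abs) (auto simp: sets_mus)
        fix x assume x: "x \<in> space (\<mu>s n)"
        show "\<bar>indicator C x * gs n x - indicator C x * \<phi> (gs n x)\<bar> \<le> \<bar>gs n x\<bar> * indicator {x \<in> space \<mu>. K \<le> \<bar>gs n x\<bar>} x"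
          using clip_err[of K "gs n x"] K x sp[of n] unfolding \<phi>_def
          by (auto simp: indicator_def)
      qed
      also have "\<dots> \<le> Tail n K1" using K by (intro Tail_mono) auto
      also have "\<dots> \<le> \<epsilon>" using N1 n by auto
      finally show ?thesis .
    qed
    have 2: "\<bar>a - b\<bar> \<le> \<epsilon>"
    proof -
      have "\<bar>a - b\<bar> \<le> 2 * K * e" unfolding a_def b_def
        using C hb N3 n K by (intro L1[OF _ sets_mus fin_mus fin_mu]) auto
      then show ?thesis using Ke by simp
    qed
    define D where "D = {x\<in>space \<mu>. \<delta> \<le> \<bar>gs n x - g x\<bar>}"
    have Ds: "D \<in> sets \<mu>" unfolding D_def by measurable
    have 3: "\<bar>b - d\<bar> \<le> 2 * \<epsilon>"
    proof -
      have "\<bar>b - d\<bar> \<le> (\<integral>x. \<delta> + 2 * K * indicator D x \<partial>\<mu>)" unfolding b_def d_def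
      proof (rule int_diff_le[OF ib id])
        show "integrable \<mu> (\<lambda>x. \<delta> + 2 * K * indicator D x)"
          using Ds by (intro Bochner_Integration.integrable_add integrable_mult_right integrable_real_indicator mu.integrable_const)
            (auto simp: mu.emeasure_finite top.not_eq_extremum[symmetric])
        fix x assume x: "x \<in> space \<mu>"
        have l: "\<bar>\<phi> (gs n x) - \<phi> (g x)\<bar> \<le> \<bar>gs n x - g x\<bar>" unfolding \<phi>_def by (rule clip_lip)
        have m: "\<bar>\<phi> (gs n x) - \<phi> (g x)\<bar> \<le> 2 * K" using hb[of x] K unfolding \<phi>_def
          using clip_bd[of K "gs n x"] clip_bd[of K "g x"] by linarith
        show "\<bar>indicator C x * \<phi> (gs n x) - indicator C x * \<phi> (g x)\<bar> \<le> \<delta> + 2 * K * indicator D x"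
        proof (cases "x \<in> D")
          case True
          then show ?thesis using m \<delta>0 by (auto simp: indicator_def)
        next
          case False
          then have "\<bar>gs n x - g x\<bar> < \<delta>" using x by (auto simp: D_def)
          then show ?thesis using l False \<delta>0 K by (auto simp: indicator_def)
        qed
      qed
      also have "\<dots> = \<delta> * c + 2 * K * measure \<mu> D"
        using Ds by (subst Bochner_Integration.integral_add)
          (auto intro!: integrable_mult_right integrable_real_indicator
            simp: c_def Int_absorb2 sets.sets_into_space mu.emeasure_finite top.not_eq_extremum[symmetric])
      also have "\<dots> \<le> \<epsilon> + 2 * K * e"
        using \<delta>c N2 n K by (intro add_mono mult_left_mono) (auto simp: D_def)
      finally show ?thesis using Ke by simp
    qed
    have 4: "\<bar>d - J C\<bar> \<le> \<epsilon>"
    proof -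
      have "\<bar>d - J C\<bar> \<le> (\<integral>x. \<bar>g x\<bar> * indicator {x\<in>space \<mu>. K \<le> \<bar>g x\<bar>} x \<partial>\<mu>)"
        unfolding d_def J_def
      proof (rule int_diff_le[OF id int_ind_g[OF C]])
        show "integrable \<mu> (\<lambda>x. \<bar>g x\<bar> * indicator {x \<in> space \<mu>. K \<le> \<bar>g x\<bar>} x)"
          using g_int by (intro integrable_real_mult_indicator integrable_abs) auto
        fix x assume x: "x \<in> space \<mu>"
        show "\<bar>indicator C x * \<phi> (g x) - indicator C x * g x\<bar> \<le> \<bar>g x\<bar> * indicator {x \<in> space \<mu>. K \<le> \<bar>g x\<bar>} x"
          using clip_err[of K "g x"] K x unfolding \<phi>_def
          by (auto simp: indicator_def abs_minus_commute)
      qed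
      also have "\<dots> \<le> \<epsilon>" using K2 K by auto
      finally show ?thesis .
    qed
    show "\<bar>I n C - J C\<bar> \<le> 5 * \<epsilon>" using 1 2 3 4 by linarith
  qed
qed

lemma SC_of_CM_UI: assumes CM UI shows SC
  unfolding SC_def
proof (intro allI impI)
  fix \<epsilon> :: real assume "\<epsilon> > 0"
  then obtain N where "\<forall>n\<ge>N. \<forall>C\<in>sets \<mu>. \<bar>I n C - J C\<bar> \<le> 5 * (\<epsilon> / 5)"
    using SC5[OF assms, of "\<epsilon>/5"] by auto
  then show "\<exists>N. \<forall>n\<ge>N. \<forall>C\<in>sets \<mu>. \<bar>I n C - J C\<bar> \<le> \<epsilon>" by auto
qed

theorem core_equiv: "SC \<longleftrightarrow> CM \<and> UI"
  using SC_of_CM_UI CM_of_SC UI_of_SC by blast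

end

lemma enn2ereal_fin: "A \<noteq> top \<Longrightarrow> enn2ereal A = ereal (enn2real A)"
  by (cases A rule: ennreal_cases) auto

lemma e2_abs_fin: "e2ennreal \<bar>x\<bar> \<noteq> top \<Longrightarrow> \<bar>x\<bar> \<noteq> \<infinity>"
  by auto

lemma ennreal_abs_real_le: "ennreal \<bar>real_of_ereal x\<bar> \<le> e2ennreal \<bar>x\<bar>"
  by (cases x) auto

lemma pw1: "\<bar>y\<bar> \<noteq> \<infinity> \<Longrightarrow> ennreal (indicator C x * real_of_ereal y) = e2ennreal (max y 0) * indicator C x"
  by (cases y) (auto simp: indicator_def max_def ennreal_neg e2ennreal_neg)

lemma pw2: "\<bar>y\<bar> \<noteq> \<infinity> \<Longrightarrow> ennreal (- (indicator C x * real_of_ereal y)) = e2ennreal (max (- y) 0) * indicator C x"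
  by (cases y) (auto simp: indicator_def max_def ennreal_neg e2ennreal_neg)

lemma ereal_le_abs': "(x::ereal) \<le> \<bar>x\<bar>" "- x \<le> \<bar>x\<bar>"
  by (cases x; simp)+

lemma ereal_int_fin:
  assumes "ereal_integrable M f"
  shows "AE x in M. \<bar>f x\<bar> \<noteq> \<infinity>"
proof -
  have fm[measurable]: "f \<in> borel_measurable M" using assms by (simp add: ereal_integrable_def)
  have "AE x in M. e2ennreal \<bar>f x\<bar> \<noteq> \<infinity>"
    using assms by (intro nn_integral_PInf_AE) (auto simp: ereal_integrable_def)
  then show ?thesis by (rule AE_mp) (auto intro!: AE_I2)
qed

lemma ereal_int_real:
  assumes "ereal_integrable M f"
  shows "integrable M (\<lambda>x. real_of_ereal (f x))"
proof (rule integrableI_bounded)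
  have fm[measurable]: "f \<in> borel_measurable M" using assms by (simp add: ereal_integrable_def)
  show "(\<lambda>x. real_of_ereal (f x)) \<in> borel_measurable M" by measurable
  have "(\<integral>\<^sup>+ x. ennreal (norm (real_of_ereal (f x))) \<partial>M) \<le> (\<integral>\<^sup>+ x. e2ennreal \<bar>f x\<bar> \<partial>M)"
    by (intro nn_integral_mono) (metis ennreal_abs_real_le real_norm_def)
  also have "\<dots> < \<infinity>" using assms by (simp add: ereal_integrable_def)
  finally show "(\<integral>\<^sup>+ x. ennreal (norm (real_of_ereal (f x))) \<partial>M) < \<infinity>" .
qed

lemma ereal_set_int_eq:
  assumes fi: "ereal_integrable M f" and C: "C \<in> sets M"
  shows "ereal_set_integral M C f = ereal (\<integral>x. indicator C x * real_of_ereal (f x) \<partial>M)"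
proof -
  have fm[measurable]: "f \<in> borel_measurable M" using fi by (simp add: ereal_integrable_def)
  define u where "u x = indicator C x * real_of_ereal (f x)" for x
  have ui: "integrable M u" unfolding u_def using C ereal_int_real[OF fi]
    by (subst mult.commute) (rule integrable_real_mult_indicator)
  have fin: "AE x in M. \<bar>f x\<bar> \<noteq> \<infinity>" by (rule ereal_int_fin[OF fi])
  have e1: "(\<integral>\<^sup>+ x. ennreal (u x) \<partial>M) = (\<integral>\<^sup>+ x. e2ennreal (max (f x) 0) * indicator C x \<partial>M)"
  proof (rule nn_integral_cong_AE)
    show "AE x in M. ennreal (u x) = e2ennreal (max (f x) 0) * indicator C x"
      using fin by eventually_elim (simp add: u_def pw1)
  qed
  have e2: "(\<integral>\<^sup>+ x. ennreal (- u x) \<partial>M) = (\<integral>\<^sup>+ x. e2ennreal (max (- f x) 0) * indicator C x \<partial>M)"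
  proof (rule nn_integral_cong_AE)
    show "AE x in M. ennreal (- u x) = e2ennreal (max (- f x) 0) * indicator C x"
      using fin by eventually_elim (simp add: u_def pw2)
  qed
  have b1: "(\<integral>\<^sup>+ x. e2ennreal (max (f x) 0) * indicator C x \<partial>M) \<noteq> top"
  proof -
    have "(\<integral>\<^sup>+ x. e2ennreal (max (f x) 0) * indicator C x \<partial>M) \<le> (\<integral>\<^sup>+ x. e2ennreal \<bar>f x\<bar> \<partial>M)"
      by (intro nn_integral_mono) (auto simp: indicator_def ereal_le_abs' intro!: e2ennreal_mono)
    also have "\<dots> < \<infinity>" using fi by (simp add: ereal_integrable_def)
    finally show ?thesis by simp
  qed
  have b2: "(\<integral>\<^sup>+ x. e2ennreal (max (- f x) 0) * indicator C x \<partial>M) \<noteq> top"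
  proof -
    have "(\<integral>\<^sup>+ x. e2ennreal (max (- f x) 0) * indicator C x \<partial>M) \<le> (\<integral>\<^sup>+ x. e2ennreal \<bar>f x\<bar> \<partial>M)"
      by (intro nn_integral_mono) (auto simp: indicator_def ereal_le_abs' intro!: e2ennreal_mono)
    also have "\<dots> < \<infinity>" using fi by (simp add: ereal_integrable_def)
    finally show ?thesis by simp
  qed
  have "(\<integral>x. u x \<partial>M) = enn2real (\<integral>\<^sup>+ x. ennreal (u x) \<partial>M) - enn2real (\<integral>\<^sup>+ x. ennreal (- u x) \<partial>M)"
    by (rule real_lebesgue_integral_def[OF ui])
  then show ?thesis
    unfolding ereal_set_integral_def u_def[symmetric] e1[symmetric] e2[symmetric]
    using b1 b2 e1 e2 by (simp add: enn2ereal_fin)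
qed

lemma sup_tendsto_iff:
  fixes X :: "nat \<Rightarrow> 'b \<Rightarrow> real"
  assumes A: "A \<noteq> {}"
  shows "(\<lambda>n. SUP C\<in>A. ereal \<bar>X n C\<bar>) \<longlonglongrightarrow> 0 \<longleftrightarrow> (\<forall>\<epsilon>>0. \<exists>N. \<forall>n\<ge>N. \<forall>C\<in>A. \<bar>X n C\<bar> \<le> \<epsilon>)"
proof
  assume lim: "(\<lambda>n. SUP C\<in>A. ereal \<bar>X n C\<bar>) \<longlonglongrightarrow> 0"
  show "\<forall>\<epsilon>>0. \<exists>N. \<forall>n\<ge>N. \<forall>C\<in>A. \<bar>X n C\<bar> \<le> \<epsilon>"
  proof (intro allI impI)
    fix \<epsilon> :: real assume "\<epsilon> > 0"
    then have "eventually (\<lambda>n. (SUP C\<in>A. ereal \<bar>X n C\<bar>) < ereal \<epsilon>) sequentially"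
      using lim by (intro order_tendstoD(2)) auto
    then obtain N where N: "\<forall>n\<ge>N. (SUP C\<in>A. ereal \<bar>X n C\<bar>) < ereal \<epsilon>"
      by (auto simp: eventually_sequentially)
    show "\<exists>N. \<forall>n\<ge>N. \<forall>C\<in>A. \<bar>X n C\<bar> \<le> \<epsilon>"
    proof (intro exI allI impI ballI)
      fix n C assume "n \<ge> N" "C \<in> A"
      then have "ereal \<bar>X n C\<bar> \<le> (SUP C\<in>A. ereal \<bar>X n C\<bar>)" by (intro SUP_upper)
      then have "ereal \<bar>X n C\<bar> < ereal \<epsilon>" using N \<open>n \<ge> N\<close> by (meson order.strict_trans1)
      then show "\<bar>X n C\<bar> \<le> \<epsilon>" by simp
    qed
  qed
next
  assume H: "\<forall>\<epsilon>>0. \<exists>N. \<forall>n\<ge>N. \<forall>C\<in>A. \<bar>X n C\<bar> \<le> \<epsilon>"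
  show "(\<lambda>n. SUP C\<in>A. ereal \<bar>X n C\<bar>) \<longlonglongrightarrow> 0"
  proof (rule order_tendstoI)
    fix a :: ereal assume "a < 0"
    obtain C where "C \<in> A" using A by blast
    have "a < ereal \<bar>X n C\<bar>" for n using \<open>a < 0\<close> abs_ge_zero[of "X n C"] by (simp add: less_le_trans)
    also have "ereal \<bar>X n C\<bar> \<le> (SUP C\<in>A. ereal \<bar>X n C\<bar>)" for n using \<open>C \<in> A\<close> by (intro SUP_upper)
    finally show "eventually (\<lambda>n. a < (SUP C\<in>A. ereal \<bar>X n C\<bar>)) sequentially" by simp
  next
    fix a :: ereal assume "a > 0"
    obtain r :: real where r: "0 < r" "ereal r < a"
    proof (cases a)
      case (real b) then show ?thesis using \<open>a > 0\<close> that[of "b/2"] by auto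
    next
      case PInf then show ?thesis using that[of 1] by auto
    next
      case MInf then show ?thesis using \<open>a > 0\<close> by auto
    qed
    obtain N where N: "\<forall>n\<ge>N. \<forall>C\<in>A. \<bar>X n C\<bar> \<le> r" using H r by blast
    have "(SUP C\<in>A. ereal \<bar>X n C\<bar>) \<le> ereal r" if "n \<ge> N" for n
      using N that by (intro SUP_least) auto
    then show "eventually (\<lambda>n. (SUP C\<in>A. ereal \<bar>X n C\<bar>) < a) sequentially"
      using r by (auto simp: eventually_sequentially intro: order.strict_trans1)
  qed
qed

lemma em_tendsto_iff:
  assumes "finite_measure M" and A: "\<And>n. A n \<in> sets M"
  shows "(\<lambda>n. emeasure M (A n)) \<longlonglongrightarrow> 0 \<longleftrightarrow> (\<forall>\<eta>>0. \<exists>N. \<forall>n\<ge>N. measure M (A n) \<le> \<eta>)"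
proof -
  interpret finite_measure M by fact
  have e: "emeasure M (A n) = ennreal (measure M (A n))" for n by (simp add: emeasure_eq_measure)
  have "(\<lambda>n. emeasure M (A n)) \<longlonglongrightarrow> 0 \<longleftrightarrow> (\<lambda>n. measure M (A n)) \<longlonglongrightarrow> 0"
  proof
    assume "(\<lambda>n. emeasure M (A n)) \<longlonglongrightarrow> 0"
    then have "(\<lambda>n. enn2real (emeasure M (A n))) \<longlonglongrightarrow> 0"
      by (intro tendsto_enn2real) auto
    then show "(\<lambda>n. measure M (A n)) \<longlonglongrightarrow> 0" by (simp add: measure_def)
  next
    assume "(\<lambda>n. measure M (A n)) \<longlonglongrightarrow> 0"
    then have "(\<lambda>n. ennreal (measure M (A n))) \<longlonglongrightarrow> ennreal 0" by (rule tendsto_ennrealI)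
    then show "(\<lambda>n. emeasure M (A n)) \<longlonglongrightarrow> 0" by (simp add: e)
  qed
  also have "\<dots> \<longleftrightarrow> (\<forall>\<eta>>0. \<exists>N. \<forall>n\<ge>N. measure M (A n) \<le> \<eta>)"
  proof
    assume "(\<lambda>n. measure M (A n)) \<longlonglongrightarrow> 0"
    then show "\<forall>\<eta>>0. \<exists>N. \<forall>n\<ge>N. measure M (A n) \<le> \<eta>"
    proof (intro allI impI)
      fix \<eta> :: real assume "\<eta> > 0"
      assume "(\<lambda>n. measure M (A n)) \<longlonglongrightarrow> 0"
      from LIMSEQ_D[OF this \<open>\<eta> > 0\<close>] obtain N where "\<forall>n\<ge>N. norm (measure M (A n) - 0) < \<eta>" by blast
      then show "\<exists>N. \<forall>n\<ge>N. measure M (A n) \<le> \<eta>" by force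
    qed
  next
    assume H: "\<forall>\<eta>>0. \<exists>N. \<forall>n\<ge>N. measure M (A n) \<le> \<eta>"
    show "(\<lambda>n. measure M (A n)) \<longlonglongrightarrow> 0"
    proof (rule LIMSEQ_I)
      fix r :: real assume "r > 0"
      then obtain N where "\<forall>n\<ge>N. measure M (A n) \<le> r / 2" using H by (meson half_gt_zero)
      then show "\<exists>no. \<forall>n\<ge>no. norm (measure M (A n) - 0) < r" using \<open>r > 0\<close> by force
    qed
  qed
  finally show ?thesis .
qed

lemma limsup_trans:
  fixes T :: "nat \<Rightarrow> real \<Rightarrow> real"
  assumes mono: "\<And>n K K'. K \<le> K' \<Longrightarrow> T n K' \<le> T n K"
  shows "((\<lambda>K. limsup (\<lambda>n. ennreal (T n K))) \<longlongrightarrow> 0) at_top \<longleftrightarrow> (\<forall>\<eta>>0. \<exists>K N. \<forall>n\<ge>N. T n K \<le> \<eta>)"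
proof
  assume lim: "((\<lambda>K. limsup (\<lambda>n. ennreal (T n K))) \<longlongrightarrow> 0) at_top"
  show "\<forall>\<eta>>0. \<exists>K N. \<forall>n\<ge>N. T n K \<le> \<eta>"
  proof (intro allI impI)
    fix \<eta> :: real assume "\<eta> > 0"
    then have "eventually (\<lambda>K. limsup (\<lambda>n. ennreal (T n K)) < ennreal \<eta>) at_top"
      using lim by (intro order_tendstoD(2)) auto
    then obtain K where "limsup (\<lambda>n. ennreal (T n K)) < ennreal \<eta>"
      by (auto simp: eventually_at_top_linorder)
    then have "eventually (\<lambda>n. ennreal (T n K) < ennreal \<eta>) sequentially" by (rule Limsup_lessD)
    then obtain N where N: "\<forall>n\<ge>N. ennreal (T n K) < ennreal \<eta>" by (auto simp: eventually_sequentially)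
    have "T n K \<le> \<eta>" if "n \<ge> N" for n
    proof (rule ccontr)
      assume "\<not> T n K \<le> \<eta>"
      then have "ennreal \<eta> \<le> ennreal (T n K)" by (intro ennreal_leI) auto
      then show False using N that by (simp add: not_less[symmetric])
    qed
    then show "\<exists>K N. \<forall>n\<ge>N. T n K \<le> \<eta>" by blast
  qed
next
  assume H: "\<forall>\<eta>>0. \<exists>K N. \<forall>n\<ge>N. T n K \<le> \<eta>"
  show "((\<lambda>K. limsup (\<lambda>n. ennreal (T n K))) \<longlongrightarrow> 0) at_top"
  proof (rule order_tendstoI)
    fix a :: ennreal assume "a < 0" then show "eventually (\<lambda>K. a < limsup (\<lambda>n. ennreal (T n K))) at_top"
      by (simp add: not_less_zero)
  next
    fix a :: ennreal assume "a > 0"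
    obtain b where b: "0 < b" "b < a" using dense[OF \<open>a > 0\<close>] by blast
    have bt: "b < top" using b(2) top_greatest[of a] by (rule order.strict_trans2)
    define \<eta> where "\<eta> = enn2real b"
    have \<eta>: "b = ennreal \<eta>" using bt by (simp add: \<eta>_def)
    have "0 < ennreal \<eta>" using b(1) \<eta> by simp
    then have \<eta>0: "\<eta> > 0" by simp
    obtain K0 N where N: "\<forall>n\<ge>N. T n K0 \<le> \<eta>" using H[rule_format, OF \<eta>0] by blast
    have "limsup (\<lambda>n. ennreal (T n K)) \<le> ennreal \<eta>" if K: "K \<ge> K0" for K
    proof (rule Limsup_bounded)
      have "T n K \<le> \<eta>" if n: "n \<ge> N" for n
      proof -
        have "T n K \<le> T n K0" using mono K by blast
        also have "\<dots> \<le> \<eta>" using N n by blast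
        finally show ?thesis .
      qed
      then show "eventually (\<lambda>n. ennreal (T n K) \<le> ennreal \<eta>) sequentially"
        unfolding eventually_sequentially by (blast intro: ennreal_leI)
    qed
    then have "\<forall>K\<ge>K0. limsup (\<lambda>n. ennreal (T n K)) < a"
      using b(2) unfolding \<eta>(1) by (meson order.strict_trans1)
    then show "eventually (\<lambda>K. limsup (\<lambda>n. ennreal (T n K)) < a) at_top"
      unfolding eventually_at_top_linorder by blast
  qed
qed

context core begin

lemma ui_trans:
  assumes gs_def: "\<And>n x. gs n x = real_of_ereal (fs n x)"
    and fin: "\<And>n. AE x in \<mu>s n. \<bar>fs n x\<bar> \<noteq> \<infinity>"
  shows "asympt_unif_integrable fs \<mu>s \<longleftrightarrow> UI"
proof -
  have eq: "(\<integral>\<^sup>+ s. e2ennreal \<bar>fs n s\<bar> * indicator {s. ereal K \<le> \<bar>fs n s\<bar>} s \<partial>(\<mu>s n)) = ennreal (Tail n K)" for n K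
  proof -
    have int: "integrable (\<mu>s n) (\<lambda>x. \<bar>gs n x\<bar> * indicator {x\<in>space \<mu>. K \<le> \<bar>gs n x\<bar>} x)"
      using gs_int[of n] by (intro integrable_real_mult_indicator integrable_abs) (auto simp: sets_mus)
    have "ennreal (Tail n K) = (\<integral>\<^sup>+ x. ennreal (\<bar>gs n x\<bar> * indicator {x\<in>space \<mu>. K \<le> \<bar>gs n x\<bar>} x) \<partial>\<mu>s n)"
      unfolding Tail_def by (rule nn_integral_eq_integral[symmetric, OF int]) (auto intro!: AE_I2)
    also have "\<dots> = (\<integral>\<^sup>+ s. e2ennreal \<bar>fs n s\<bar> * indicator {s. ereal K \<le> \<bar>fs n s\<bar>} s \<partial>(\<mu>s n))"
    proof (rule nn_integral_cong_AE)
      show "AE x in \<mu>s n. ennreal (\<bar>gs n x\<bar> * indicator {x\<in>space \<mu>. K \<le> \<bar>gs n x\<bar>} x) = e2ennreal \<bar>fs n x\<bar> * indicator {s. ereal K \<le> \<bar>fs n s\<bar>} x"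
        using fin[of n] AE_space
      proof eventually_elim
        case (elim x)
        then show ?case by (cases "fs n x") (auto simp: gs_def indicator_def sp)
      qed
    qed
    finally show ?thesis by simp
  qed
  show ?thesis
    unfolding asympt_unif_integrable_def UI_def eq
    by (rule limsup_trans) (rule Tail_mono)
qed


lemma cm_trans:
  assumes g_def: "\<And>x. g x = real_of_ereal (f x)" and gs_def: "\<And>n x. gs n x = real_of_ereal (fs n x)"
    and finf: "AE x in \<mu>. \<bar>f x\<bar> \<noteq> \<infinity>" and fin: "\<And>n. AE x in \<mu>s n. \<bar>fs n x\<bar> \<noteq> \<infinity>"
    and fm[measurable]: "f \<in> borel_measurable \<mu>" and fsm[measurable]: "\<And>n. fs n \<in> borel_measurable \<mu>"
  shows "converges_in_measure \<mu> fs f \<longleftrightarrow> CM"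
proof -
  interpret mu: finite_measure \<mu> by (rule fin_mu)
  define Z where "Z = {x\<in>space \<mu>. \<not> \<bar>f x\<bar> \<noteq> \<infinity>}"
  define Zn where "Zn n = {x\<in>space \<mu>. \<not> \<bar>fs n x\<bar> \<noteq> \<infinity>}" for n
  have Zs: "Z \<in> sets \<mu>" unfolding Z_def by measurable
  have Zns: "Zn n \<in> sets \<mu>" for n unfolding Zn_def by measurable
  have "emeasure \<mu> Z = 0" using AE_iff_measurable[OF Zs Z_def[symmetric]] finf by (rule iffD1)
  then have mZ: "measure \<mu> Z = 0" by (simp add: measure_def)
  have "emeasure (\<mu>s n) (Zn n) = 0" for n
  proof -
    have "Zn n \<in> sets (\<mu>s n)" using Zns[of n] by (simp add: sets_mus)
    moreover have "{x\<in>space (\<mu>s n). \<not> \<bar>fs n x\<bar> \<noteq> \<infinity>} = Zn n" unfolding Zn_def sp ..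
    ultimately have "(AE x in \<mu>s n. \<bar>fs n x\<bar> \<noteq> \<infinity>) \<longleftrightarrow> emeasure (\<mu>s n) (Zn n) = 0"
      by (rule AE_iff_measurable)
    with fin[of n] show ?thesis by blast
  qed
  then have mZn: "measure (\<mu>s n) (Zn n) = 0" for n by (simp add: measure_def)
  have Zn_small: "\<exists>N. \<forall>n\<ge>N. measure \<mu> (Zn n) \<le> \<eta>" if eta: "\<eta> > 0" for \<eta>
  proof -
    obtain N where "\<forall>n\<ge>N. \<forall>C\<in>sets \<mu>. \<bar>measure (\<mu>s n) C - measure \<mu> C\<bar> \<le> \<eta>" using tvr[OF eta] by blast
    then have "\<bar>measure (\<mu>s n) (Zn n) - measure \<mu> (Zn n)\<bar> \<le> \<eta>" if "n \<ge> N" for n using Zns that by blast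
    then show ?thesis using mZn by (metis abs_minus_cancel abs_le_D1 diff_0 minus_diff_eq)
  qed
  have main: "(\<lambda>n. emeasure \<mu> {s \<in> space \<mu>. ereal \<epsilon> \<le> \<bar>fs n s - f s\<bar>}) \<longlonglongrightarrow> 0 \<longleftrightarrow>
      (\<forall>\<eta>>0. \<exists>N. \<forall>n\<ge>N. measure \<mu> {x\<in>space \<mu>. \<epsilon> \<le> \<bar>gs n x - g x\<bar>} \<le> \<eta>)" for \<epsilon> :: real
  proof -
    define E where "E n = {s \<in> space \<mu>. ereal \<epsilon> \<le> \<bar>fs n s - f s\<bar>}" for n
    define R where "R n = {x\<in>space \<mu>. \<epsilon> \<le> \<bar>gs n x - g x\<bar>}" for n
    have Es: "E n \<in> sets \<mu>" for n unfolding E_def by measurable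
    have Rs: "R n \<in> sets \<mu>" for n unfolding R_def gs_def g_def by measurable
    have pw: "x \<in> E n \<longleftrightarrow> x \<in> R n" if "x \<in> space \<mu>" "x \<notin> Z" "x \<notin> Zn n" for x n
      using that unfolding E_def R_def Z_def Zn_def gs_def g_def
      by (cases "f x"; cases "fs n x") auto
    have sub1: "E n \<subseteq> R n \<union> Z \<union> Zn n" for n
    proof
      fix x assume x: "x \<in> E n"
      then have "x \<in> space \<mu>" by (simp add: E_def)
      then show "x \<in> R n \<union> Z \<union> Zn n" using pw[of x n] x by blast
    qed
    have sub2: "R n \<subseteq> E n \<union> Z \<union> Zn n" for n
    proof
      fix x assume x: "x \<in> R n"
      then have "x \<in> space \<mu>" by (simp add: R_def)
      then show "x \<in> E n \<union> Z \<union> Zn n" using pw[of x n] x by blast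
    qed
    have le3: "measure \<mu> A \<le> measure \<mu> B + measure \<mu> (Zn n)" if "A \<subseteq> B \<union> Z \<union> Zn n" "B \<in> sets \<mu>" for A B n
    proof -
      have "measure \<mu> A \<le> measure \<mu> (B \<union> Z \<union> Zn n)" using that Zs Zns by (intro mu.finite_measure_mono) auto
      also have "\<dots> \<le> measure \<mu> B + measure \<mu> Z + measure \<mu> (Zn n)"
        using that Zs Zns measure_Un_le[of B \<mu> Z] measure_Un_le[of "B \<union> Z" \<mu> "Zn n"] by auto
      finally show ?thesis using mZ by simp
    qed
    have E1: "measure \<mu> (E n) \<le> measure \<mu> (R n) + measure \<mu> (Zn n)" for n by (rule le3[OF sub1 Rs])
    have E2: "measure \<mu> (R n) \<le> measure \<mu> (E n) + measure \<mu> (Zn n)" for n by (rule le3[OF sub2 Es])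
    have trans: "(\<forall>\<eta>>0. \<exists>N. \<forall>n\<ge>N. measure \<mu> (A n) \<le> \<eta>)"
      if AB: "\<And>n. measure \<mu> (A n) \<le> measure \<mu> (B n) + measure \<mu> (Zn n)"
        and H: "\<forall>\<eta>>0. \<exists>N. \<forall>n\<ge>N. measure \<mu> (B n) \<le> \<eta>" for A B
    proof (intro allI impI)
      fix \<eta> :: real assume "\<eta> > 0"
      then obtain N1 where N1: "\<forall>n\<ge>N1. measure \<mu> (B n) \<le> \<eta>/2" using H by (meson half_gt_zero)
      obtain N2 where N2: "\<forall>n\<ge>N2. measure \<mu> (Zn n) \<le> \<eta>/2" using Zn_small \<open>\<eta> > 0\<close> by (meson half_gt_zero)
      have "measure \<mu> (A n) \<le> \<eta>" if "n \<ge> max N1 N2" for n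
      proof -
        have "measure \<mu> (B n) \<le> \<eta>/2" "measure \<mu> (Zn n) \<le> \<eta>/2" using N1 N2 that by auto
        then show ?thesis using AB[of n] by linarith
      qed
      then show "\<exists>N. \<forall>n\<ge>N. measure \<mu> (A n) \<le> \<eta>" by blast
    qed
    have "(\<lambda>n. emeasure \<mu> (E n)) \<longlonglongrightarrow> 0 \<longleftrightarrow> (\<forall>\<eta>>0. \<exists>N. \<forall>n\<ge>N. measure \<mu> (E n) \<le> \<eta>)"
      by (rule em_tendsto_iff[OF fin_mu Es])
    also have "\<dots> \<longleftrightarrow> (\<forall>\<eta>>0. \<exists>N. \<forall>n\<ge>N. measure \<mu> (R n) \<le> \<eta>)"
      using trans[of E R, OF E1] trans[of R E, OF E2] by blast
    finally show ?thesis unfolding E_def R_def .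
  qed
  show ?thesis unfolding converges_in_measure_def CM_def using main by blast
qed

end

theorem proposition4p2:
  fixes M :: "'a measure" and \<mu> :: "'a measure" and \<mu>s :: "nat \<Rightarrow> 'a measure"
    and f :: "'a \<Rightarrow> ereal" and fs :: "nat \<Rightarrow> 'a \<Rightarrow> ereal"
  assumes sets_mu: "sets \<mu> = sets M"
    and sets_mus: "\<And>n. sets (\<mu>s n) = sets M"
    and fin_mu: "finite_measure \<mu>"
    and fin_mus: "\<And>n. finite_measure (\<mu>s n)"
    and tv: "tv_converges \<mu>s \<mu>"
    and f_meas: "f \<in> borel_measurable M"
    and fs_meas: "\<And>n. fs n \<in> borel_measurable M"
    and f_int: "ereal_integrable \<mu> f"
    and fs_int: "\<And>n. ereal_integrable (\<mu>s n) (fs n)"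
  shows "(\<lambda>n. SUP C \<in> sets M.
            \<bar>ereal_set_integral (\<mu>s n) C (fs n) - ereal_set_integral \<mu> C f\<bar>) \<longlonglongrightarrow> 0
         \<longleftrightarrow> converges_in_measure \<mu> fs f \<and> asympt_unif_integrable fs \<mu>s"
proof -
  define g where "g x = real_of_ereal (f x)" for x
  define gs where "gs n x = real_of_ereal (fs n x)" for n x
  have sm: "sets (\<mu>s n) = sets \<mu>" for n using sets_mus sets_mu by simp
  have ne: "sets \<mu> \<noteq> {}" using sets.empty_sets[of \<mu>] by blast
  have tvr: "\<forall>\<epsilon>>0. \<exists>N. \<forall>n\<ge>N. \<forall>C\<in>sets \<mu>. \<bar>measure (\<mu>s n) C - measure \<mu> C\<bar> \<le> \<epsilon>"
    using tv sup_tendsto_iff[OF ne, of "\<lambda>n C. measure (\<mu>s n) C - measure \<mu> C"]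
    unfolding tv_converges_def by simp
  interpret core \<mu> \<mu>s g gs
  proof (rule core.intro)
    show "sets (\<mu>s n) = sets \<mu>" for n by (rule sm)
    show "finite_measure \<mu>" by (rule fin_mu)
    show "finite_measure (\<mu>s n)" for n by (rule fin_mus)
    show "\<exists>N. \<forall>n\<ge>N. \<forall>C\<in>sets \<mu>. \<bar>measure (\<mu>s n) C - measure \<mu> C\<bar> \<le> \<epsilon>" if "\<epsilon> > 0" for \<epsilon>
      using tvr that by blast
    show "integrable \<mu> g" unfolding g_def by (rule ereal_int_real[OF f_int])
    show "integrable (\<mu>s n) (gs n)" for n unfolding gs_def by (rule ereal_int_real[OF fs_int])
  qed
  have fm: "f \<in> borel_measurable \<mu>" using f_meas by (simp add: measurable_cong_sets[OF sets_mu refl])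
  have fsm: "fs n \<in> borel_measurable \<mu>" for n using fs_meas[of n] by (simp add: measurable_cong_sets[OF sets_mu refl])
  have lhs: "(\<lambda>n. SUP C \<in> sets M. \<bar>ereal_set_integral (\<mu>s n) C (fs n) - ereal_set_integral \<mu> C f\<bar>)
      = (\<lambda>n. SUP C \<in> sets \<mu>. ereal \<bar>I n C - J C\<bar>)"
  proof (rule ext)
    fix n
    show "(SUP C \<in> sets M. \<bar>ereal_set_integral (\<mu>s n) C (fs n) - ereal_set_integral \<mu> C f\<bar>)
      = (SUP C \<in> sets \<mu>. ereal \<bar>I n C - J C\<bar>)"
      unfolding sets_mu[symmetric]
    proof (rule SUP_cong[OF refl])
      fix C assume C: "C \<in> sets \<mu>"
      have "ereal_set_integral (\<mu>s n) C (fs n) = ereal (I n C)"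
        using ereal_set_int_eq[OF fs_int, of C n] C sm unfolding I_def gs_def by simp
      moreover have "ereal_set_integral \<mu> C f = ereal (J C)"
        using ereal_set_int_eq[OF f_int C] unfolding J_def g_def by simp
      ultimately show "\<bar>ereal_set_integral (\<mu>s n) C (fs n) - ereal_set_integral \<mu> C f\<bar> = ereal \<bar>I n C - J C\<bar>"
        by simp
    qed
  qed
  have "(\<lambda>n. SUP C \<in> sets M. \<bar>ereal_set_integral (\<mu>s n) C (fs n) - ereal_set_integral \<mu> C f\<bar>) \<longlonglongrightarrow> 0 \<longleftrightarrow> SC"
    unfolding lhs SC_def by (rule sup_tendsto_iff[OF ne])
  also have "\<dots> \<longleftrightarrow> CM \<and> UI" by (rule core_equiv)
  also have "CM \<longleftrightarrow> converges_in_measure \<mu> fs f"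
    by (rule cm_trans[symmetric, OF g_def gs_def ereal_int_fin[OF f_int] ereal_int_fin[OF fs_int] fm fsm])
  also have "UI \<longleftrightarrow> asympt_unif_integrable fs \<mu>s"
    by (rule ui_trans[symmetric, OF gs_def ereal_int_fin[OF fs_int]])
  finally show ?thesis .
qed

end
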